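(* Let $\Sigma$ be a finite alphabet and $S=s_0\cdots s_{m-1}\in\Sigma^m$. Then the set $\mathrm{Sub}(S)$ of all substrings of $S$, including the empty string $\varepsilon$, is a set of window representatives of length $m$.
   Context: For a finite set $\mathcal{R}\subset\Sigma^*$ and $a\in\Sigma^m$, $\mathrm{rep}_\mathcal{R}(a)$ denotes the longest suffix of $a$ (suffixes include $\varepsilon$ and $a$ itself) lying in $\mathcal{R}$. $\mathcal{R}$ is a set of window representatives of length $m$ if (1) every $a\in\Sigma^m$ has a suffix in $\mathcal{R}$ (so $\mathrm{rep}_\mathcal{R}$ is well defined on $\Sigma^m$), and (2) there exists a function $\delta_\mathcal{R}:\mathcal{R}\times\Sigma\to\mathcal{R}$ with $\delta_\mathcal{R}(\mathrm{rep}_\mathcal{R}(a),\sigma)=\mathrm{rep}_\mathcal{R}(a_1\cdots a_{m-1}\sigma)$ for all $a=a_0\cdots a_{m-1}\in\Sigma^m$ and $\sigma\in\Sigma$. *)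

theory Defs
  imports Main "HOL-Library.Sublist"
begin

text \<open>Suffixes (including the empty word and the word itself) are
  given by the library predicate suffix; substrings (contiguous factors) by sublist.\<close>

definition words_of_length :: "'a set \<Rightarrow> nat \<Rightarrow> 'a list set" where
  "words_of_length Alph m = {a. length a = m \<and> set a \<subseteq> Alph}"

definition rep :: "'a list set \<Rightarrow> 'a list \<Rightarrow> 'a list" where
  "rep R a = (THE u. suffix u a \<and> u \<in> R \<and>
                  (\<forall>v. suffix v a \<and> v \<in> R \<longrightarrow> length v \<le> length u))"

text \<open>Set of window representatives of length m over alphabet Alph.
  The window a_1 ... a_(m-1) sigma of a = a_0 ... a_(m-1) is tl a @ [sigma].\<close>
definition window_reps :: "'a set \<Rightarrow> nat \<Rightarrow> 'a list set \<Rightarrow> bool" where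
  "window_reps Alph m R \<longleftrightarrow>
     finite R \<and> R \<subseteq> lists Alph \<and>
     (\<forall>a \<in> words_of_length Alph m. \<exists>u. suffix u a \<and> u \<in> R) \<and>
     (\<exists>delta :: 'a list \<Rightarrow> 'a \<Rightarrow> 'a list.
        (\<forall>r \<in> R. \<forall>\<sigma> \<in> Alph. delta r \<sigma> \<in> R) \<and>
        (\<forall>a \<in> words_of_length Alph m. \<forall>\<sigma> \<in> Alph.
            delta (rep R a) \<sigma> = rep R (tl a @ [\<sigma>])))"

definition Sub :: "'a list \<Rightarrow> 'a list set" where
  "Sub S = {u. sublist u S}"

end

theory Submission
  imports Defs
begin

lemma rep_props:
  assumes "[] \<in> R"
  shows "suffix (rep R x) x \<and> rep R x \<in> R \<and>
         (\<forall>v. suffix v x \<and> v \<in> R \<longrightarrow> length v \<le> length (rep R x))"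
proof -
  let ?P = "\<lambda>u. suffix u x \<and> u \<in> R"
  have "\<exists>u. ?P u \<and> (\<forall>y. ?P y \<longrightarrow> length y \<le> length u)"
  proof (rule ex_has_greatest_nat[where k="[]" and b="Suc (length x)"])
    show "?P []" using assms by simp
    show "\<forall>y. ?P y \<longrightarrow> length y < Suc (length x)"
      by (auto simp: less_Suc_eq_le dest: suffix_length_le)
  qed
  then obtain u where u: "?P u" "\<forall>y. ?P y \<longrightarrow> length y \<le> length u" by blast
  have "rep R x = u"
    unfolding rep_def
  proof (rule the_equality)
    show "suffix u x \<and> u \<in> R \<and> (\<forall>v. suffix v x \<and> v \<in> R \<longrightarrow> length v \<le> length u)" using u by blast
  next
    fix w assume w: "suffix w x \<and> w \<in> R \<and> (\<forall>v. suffix v x \<and> v \<in> R \<longrightarrow> length v \<le> length w)"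
    then have "length w = length u" using u by (meson le_antisym)
    then show "w = u" using u w
      by (metis suffix_length_suffix suffix_order.antisym order_refl)
  qed
  then show ?thesis using u by simp
qed

lemma rep_cong:
  "(\<And>v. v \<in> R \<Longrightarrow> suffix v x \<longleftrightarrow> suffix v y) \<Longrightarrow> rep R x = rep R y"
  unfolding rep_def by (metis)

theorem lemma16:
  fixes Alph :: "'a set" and S :: "'a list" and m :: nat
  assumes "finite Alph"
    and "S \<in> words_of_length Alph m"
  shows "window_reps Alph m (Sub S)"
proof -
  let ?R = "Sub S"
  have lenS: "length S = m" and setS: "set S \<subseteq> Alph"
    using assms(2) by (auto simp: words_of_length_def)
  have e: "[] \<in> ?R" by (simp add: Sub_def)
  have fin: "finite ?R" unfolding Sub_def
    by (metis List.finite_set set_sublists_eq)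
  have lists: "?R \<subseteq> lists Alph"
    using setS by (auto simp: Sub_def dest: set_mono_sublist)
  have lenR: "\<And>v. v \<in> ?R \<Longrightarrow> length v \<le> m"
    using lenS by (auto simp: Sub_def dest: sublist_length_le)
  have sub: "\<And>v w. v \<in> ?R \<Longrightarrow> sublist w v \<Longrightarrow> w \<in> ?R"
    by (auto simp: Sub_def intro: sublist_order.order_trans)
  define delta where "delta r \<sigma> = rep ?R (r @ [\<sigma>])" for r \<sigma>
  have key: "delta (rep ?R a) \<sigma> = rep ?R (tl a @ [\<sigma>])"
    if a: "a \<in> words_of_length Alph m" for a \<sigma>
  proof -
    have la: "length a = m" using a by (simp add: words_of_length_def)
    note u = rep_props[OF e, of a]
    let ?u = "rep ?R a"
    show ?thesis unfolding delta_def
    proof (rule rep_cong)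
      fix v assume vR: "v \<in> ?R"
      show "suffix v (?u @ [\<sigma>]) \<longleftrightarrow> suffix v (tl a @ [\<sigma>])"
      proof
        assume "suffix v (?u @ [\<sigma>])"
        then consider "v = []" | v' where "v = v' @ [\<sigma>]" "suffix v' ?u" by auto
        then show "suffix v (tl a @ [\<sigma>])"
        proof cases
          case 1 then show ?thesis by simp
        next
          case 2
          have sa: "suffix v' a" using 2 u suffix_order.order_trans by blast
          have "length v \<le> m" using lenR vR by blast
          then have "length v' \<le> length (tl a)" using 2 la by simp
          then have "suffix v' (tl a)" using sa suffix_length_suffix suffix_tl by blast
          then show ?thesis using 2 by simp
        qed
      next
        assume "suffix v (tl a @ [\<sigma>])"
        then consider "v = []" | v' where "v = v' @ [\<sigma>]" "suffix v' (tl a)" by auto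
        then show "suffix v (?u @ [\<sigma>])"
        proof cases
          case 1 then show ?thesis by simp
        next
          case 2
          have sa: "suffix v' a" using 2 suffix_tl suffix_order.order_trans by blast
          have "v' \<in> ?R" using sub[OF vR] 2 by (simp add: sublist_appendI)
          then have "length v' \<le> length ?u" using u sa by blast
          then have "suffix v' ?u" using sa u suffix_length_suffix by blast
          then show ?thesis using 2 by simp
        qed
      qed
    qed
  qed
  show ?thesis
    unfolding window_reps_def
  proof (intro conjI)
    show "\<forall>a \<in> words_of_length Alph m. \<exists>u. suffix u a \<and> u \<in> ?R"
      using e by (meson suffix_bot.extremum)
    show "\<exists>delta :: 'a list \<Rightarrow> 'a \<Rightarrow> 'a list.
        (\<forall>r \<in> ?R. \<forall>\<sigma> \<in> Alph. delta r \<sigma> \<in> ?R) \<and>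
        (\<forall>a \<in> words_of_length Alph m. \<forall>\<sigma> \<in> Alph.
            delta (rep ?R a) \<sigma> = rep ?R (tl a @ [\<sigma>]))"
      using key rep_props[OF e] by (intro exI[of _ delta]) (auto simp: delta_def)
  qed (use fin lists in auto)
qed

end
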